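(* Let $r=\langle L\leftarrow K\rightarrow R\rangle$ be a rule of an R-GT system over $\mathcal L$. Then for all TLRGs $G,H$ over $\mathcal L$: $G\Rightarrow_r H$ (in the R-GT sense) if and only if $e(G)\Rightarrow_{e(r)}e(H)$ (in the T-GT sense), where $e(r)=\langle e(L)\leftarrow e(K)\rightarrow e(R)\rangle$ with the encoded inclusions.
   Context: Let $\mathcal L=(\mathcal L_V,\mathcal L_E)$ be a label alphabet with $\mathcal L_V\cap\mathcal L_E=\emptyset$ and $\{\square,0,1\}\cap(\mathcal L_V\cup\mathcal L_E)=\emptyset$. R-GT setting: graphs $G=(V,E,s,t,l,m,p)$ with $V,E$ finite, $s,t:E\to V$ total, $l:V\rightharpoonup\mathcal L_V$ partial, $m:E\to\mathcal L_E$ total, $p:V\rightharpoonup\{0,1\}$ partial (rootedness); TLRG = $l,p$ total; morphisms preserve sources, targets, edge labels, and node labels and rootedness wherever defined. A rule has TLRGs $L,R$ and a common subgraph $K$ (sets included, $s,t,m$ restricted, $l_K\subseteq l_L$, $p_K\subseteq p_L$, likewise for $R$). Applied to TLRG $G$ via an injective $g:L\to G$ satisfying the dangling condition (no edge outside $g(L)$ incident to a node of $g(V_L\setminus V_K)$): delete images of items of $L$ not in $K$ and undefine label/rootedness of $g_V(v)$ where undefined for $v\in V_K$; add disjointly items of $R$ not in $K$ and set label/rootedness of $g_V(v)$ to $l_R(v)/p_R(v)$ where undefined in $K$; $G\Rightarrow_r H$ if $H$ is isomorphic to the result. T-GT setting: totally labelled graphs $(V,E,s,t,l,m)$, morphisms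 preserving sources, targets, labels; rules $\langle L\leftarrow K\rightarrow R\rangle$ of totally labelled graphs with $K$ a subgraph of $L,R$; a direct derivation via an injective match satisfying the dangling condition deletes $g(L\setminus K)$ and adds $R\setminus K$ disjointly (result up to isomorphism). Encoding: $e(\mathcal L)=(\{\square\},\mathcal L_E\cup\mathcal L_V\cup\{0,1\})$; for a graph $G$, $e(G)$ has nodes $V$ all labelled $\square$, an edge $(e,0)$ from $s(e)$ to $t(e)$ labelled $m(e)$ for each $e\in E$, a loop $(v,1)$ at $v$ labelled $l(v)$ for each $v$ with $l(v)$ defined, and a loop $(v,2)$ at $v$ labelled $p(v)$ for each $v$ with $p(v)$ defined; morphisms are encoded by $g_V$ on nodes, $(e,0)\mapsto(g_E(e),0)$, $(v,i)\mapsto(g_V(v),i)$. *)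

theory Defs
  imports Main
begin

text \<open>Label alphabet: node labels of type 'lv (L_V), edge labels of type 'le (L_E).
  Rootedness p(v) in {0,1} is encoded as bool (0 = False, 1 = True).
  Partial functions are option-valued.\<close>

record ('v,'e,'lv,'le) rgraph =
  rnodes :: "'v set"
  redges :: "'e set"
  rsrc   :: "'e \<Rightarrow> 'v"
  rtgt   :: "'e \<Rightarrow> 'v"
  rnlab  :: "'v \<Rightarrow> 'lv option"
  relab  :: "'e \<Rightarrow> 'le"
  rroot  :: "'v \<Rightarrow> bool option"

definition rwf :: "('v,'e,'lv,'le) rgraph \<Rightarrow> bool" where
  "rwf G \<longleftrightarrow> finite (rnodes G) \<and> finite (redges G)
     \<and> (\<forall>e\<in>redges G. rsrc G e \<in> rnodes G \<and> rtgt G e \<in> rnodes G)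
     \<and> dom (rnlab G) \<subseteq> rnodes G \<and> dom (rroot G) \<subseteq> rnodes G"

definition tlrg :: "('v,'e,'lv,'le) rgraph \<Rightarrow> bool" where
  "tlrg G \<longleftrightarrow> rwf G \<and> dom (rnlab G) = rnodes G \<and> dom (rroot G) = rnodes G"

definition rsubgraph :: "('v,'e,'lv,'le) rgraph \<Rightarrow> ('v,'e,'lv,'le) rgraph \<Rightarrow> bool" where
  "rsubgraph K L \<longleftrightarrow> rnodes K \<subseteq> rnodes L \<and> redges K \<subseteq> redges L
     \<and> (\<forall>e\<in>redges K. rsrc K e = rsrc L e \<and> rtgt K e = rtgt L e \<and> relab K e = relab L e)
     \<and> rnlab K \<subseteq>\<^sub>m rnlab L \<and> rroot K \<subseteq>\<^sub>m rroot L"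

definition rrule :: "('a,'b,'lv,'le) rgraph \<Rightarrow> ('a,'b,'lv,'le) rgraph \<Rightarrow> ('a,'b,'lv,'le) rgraph \<Rightarrow> bool" where
  "rrule L K R \<longleftrightarrow> tlrg L \<and> tlrg R \<and> rwf K \<and> rsubgraph K L \<and> rsubgraph K R"

definition rmorph :: "('a,'b,'lv,'le) rgraph \<Rightarrow> ('v,'e,'lv,'le) rgraph \<Rightarrow> ('a \<Rightarrow> 'v) \<Rightarrow> ('b \<Rightarrow> 'e) \<Rightarrow> bool" where
  "rmorph L G gV gE \<longleftrightarrow> gV ` rnodes L \<subseteq> rnodes G \<and> gE ` redges L \<subseteq> redges G
     \<and> (\<forall>e\<in>redges L. rsrc G (gE e) = gV (rsrc L e) \<and> rtgt G (gE e) = gV (rtgt L e)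
                      \<and> relab G (gE e) = relab L e)
     \<and> (\<forall>v\<in>rnodes L. \<forall>l. rnlab L v = Some l \<longrightarrow> rnlab G (gV v) = Some l)
     \<and> (\<forall>v\<in>rnodes L. \<forall>b. rroot L v = Some b \<longrightarrow> rroot G (gV v) = Some b)"

definition riso :: "('v,'e,'lv,'le) rgraph \<Rightarrow> ('w,'f,'lv,'le) rgraph \<Rightarrow> bool" where
  "riso G H \<longleftrightarrow> (\<exists>fV fE. bij_betw fV (rnodes G) (rnodes H) \<and> bij_betw fE (redges G) (redges H)
     \<and> (\<forall>e\<in>redges G. rsrc H (fE e) = fV (rsrc G e) \<and> rtgt H (fE e) = fV (rtgt G e)
                      \<and> relab H (fE e) = relab G e)
     \<and> (\<forall>v\<in>rnodes G. rnlab H (fV v) = rnlab G v \<and> rroot H (fV v) = rroot G v))"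

definition rresult :: "('v,'e,'lv,'le) rgraph \<Rightarrow> ('a,'b,'lv,'le) rgraph \<Rightarrow> ('a,'b,'lv,'le) rgraph
     \<Rightarrow> ('a,'b,'lv,'le) rgraph \<Rightarrow> ('a \<Rightarrow> 'v) \<Rightarrow> ('b \<Rightarrow> 'e) \<Rightarrow> ('v + 'a, 'e + 'b, 'lv, 'le) rgraph" where
  "rresult G L K R gV gE =
   (let
      cod = (\<lambda>x. if x \<in> rnodes K then Inl (gV x) else Inr x);
      kinv = (\<lambda>v. the_inv_into (rnodes L) gV v)
    in
   \<lparr> rnodes = Inl ` (rnodes G - gV ` (rnodes L - rnodes K)) \<union> Inr ` (rnodes R - rnodes K),
     redges = Inl ` (redges G - gE ` (redges L - redges K)) \<union> Inr ` (redges R - redges K),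
     rsrc = case_sum (\<lambda>e. Inl (rsrc G e)) (\<lambda>e. cod (rsrc R e)),
     rtgt = case_sum (\<lambda>e. Inl (rtgt G e)) (\<lambda>e. cod (rtgt R e)),
     rnlab = case_sum
        (\<lambda>v. if v \<in> gV ` {k \<in> rnodes K. rnlab K k = None} then rnlab R (kinv v) else rnlab G v)
        (\<lambda>v. rnlab R v),
     relab = case_sum (\<lambda>e. relab G e) (\<lambda>e. relab R e),
     rroot = case_sum
        (\<lambda>v. if v \<in> gV ` {k \<in> rnodes K. rroot K k = None} then rroot R (kinv v) else rroot G v)
        (\<lambda>v. rroot R v) \<rparr>)"

definition rderiv :: "('a,'b,'lv,'le) rgraph \<Rightarrow> ('a,'b,'lv,'le) rgraph \<Rightarrow> ('a,'b,'lv,'le) rgraph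
     \<Rightarrow> ('v,'e,'lv,'le) rgraph \<Rightarrow> ('w,'f,'lv,'le) rgraph \<Rightarrow> bool" where
  "rderiv L K R G H \<longleftrightarrow> (\<exists>gV gE.
     rmorph L G gV gE \<and> inj_on gV (rnodes L) \<and> inj_on gE (redges L)
     \<and> (\<forall>e \<in> redges G - gE ` redges L.
           rsrc G e \<notin> gV ` (rnodes L - rnodes K) \<and> rtgt G e \<notin> gV ` (rnodes L - rnodes K))
     \<and> riso (rresult G L K R gV gE) H)"

record ('v,'e,'l) tgraph =
  tnodes :: "'v set"
  tedges :: "'e set"
  tsrc   :: "'e \<Rightarrow> 'v"
  ttgt   :: "'e \<Rightarrow> 'v"
  tnlab  :: "'v \<Rightarrow> 'l"
  telab  :: "'e \<Rightarrow> 'l"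

definition tmorph :: "('a,'b,'l) tgraph \<Rightarrow> ('v,'e,'l) tgraph \<Rightarrow> ('a \<Rightarrow> 'v) \<Rightarrow> ('b \<Rightarrow> 'e) \<Rightarrow> bool" where
  "tmorph L G gV gE \<longleftrightarrow> gV ` tnodes L \<subseteq> tnodes G \<and> gE ` tedges L \<subseteq> tedges G
     \<and> (\<forall>e\<in>tedges L. tsrc G (gE e) = gV (tsrc L e) \<and> ttgt G (gE e) = gV (ttgt L e)
                      \<and> telab G (gE e) = telab L e)
     \<and> (\<forall>v\<in>tnodes L. tnlab G (gV v) = tnlab L v)"

definition tiso :: "('v,'e,'l) tgraph \<Rightarrow> ('w,'f,'l) tgraph \<Rightarrow> bool" where
  "tiso G H \<longleftrightarrow> (\<exists>fV fE. bij_betw fV (tnodes G) (tnodes H) \<and> bij_betw fE (tedges G) (tedges H)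
     \<and> (\<forall>e\<in>tedges G. tsrc H (fE e) = fV (tsrc G e) \<and> ttgt H (fE e) = fV (ttgt G e)
                      \<and> telab H (fE e) = telab G e)
     \<and> (\<forall>v\<in>tnodes G. tnlab H (fV v) = tnlab G v))"

definition tresult :: "('v,'e,'l) tgraph \<Rightarrow> ('a,'b,'l) tgraph \<Rightarrow> ('a,'b,'l) tgraph
     \<Rightarrow> ('a,'b,'l) tgraph \<Rightarrow> ('a \<Rightarrow> 'v) \<Rightarrow> ('b \<Rightarrow> 'e) \<Rightarrow> ('v + 'a, 'e + 'b, 'l) tgraph" where
  "tresult G L K R gV gE =
   (let cod = (\<lambda>x. if x \<in> tnodes K then Inl (gV x) else Inr x) in
   \<lparr> tnodes = Inl ` (tnodes G - gV ` (tnodes L - tnodes K)) \<union> Inr ` (tnodes R - tnodes K),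
     tedges = Inl ` (tedges G - gE ` (tedges L - tedges K)) \<union> Inr ` (tedges R - tedges K),
     tsrc = case_sum (\<lambda>e. Inl (tsrc G e)) (\<lambda>e. cod (tsrc R e)),
     ttgt = case_sum (\<lambda>e. Inl (ttgt G e)) (\<lambda>e. cod (ttgt R e)),
     tnlab = case_sum (\<lambda>v. tnlab G v) (\<lambda>v. tnlab R v),
     telab = case_sum (\<lambda>e. telab G e) (\<lambda>e. telab R e) \<rparr>)"

definition tderiv :: "('a,'b,'l) tgraph \<Rightarrow> ('a,'b,'l) tgraph \<Rightarrow> ('a,'b,'l) tgraph
     \<Rightarrow> ('v,'e,'l) tgraph \<Rightarrow> ('w,'f,'l) tgraph \<Rightarrow> bool" where
  "tderiv L K R G H \<longleftrightarrow> (\<exists>gV gE.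
     tmorph L G gV gE \<and> inj_on gV (tnodes L) \<and> inj_on gE (tedges L)
     \<and> (\<forall>e \<in> tedges G - gE ` tedges L.
           tsrc G e \<notin> gV ` (tnodes L - tnodes K) \<and> ttgt G e \<notin> gV ` (tnodes L - tnodes K))
     \<and> tiso (tresult G L K R gV gE) H)"

text \<open>Encoded edges: EE e = (e,0), ELab v = (v,1), ERoot v = (v,2).\<close>
datatype ('v,'e) enc_edge = EE 'e | ELab 'v | ERoot 'v

text \<open>Encoded alphabet e(L) = ({Box}, L_E \<union> L_V \<union> {0,1}); the datatype makes the
  components disjoint. RootBit False = 0, RootBit True = 1.\<close>
datatype ('lv,'le) enc_label = Box | EdgeL 'le | NodeL 'lv | RootBit bool

definition enc :: "('v,'e,'lv,'le) rgraph \<Rightarrow> ('v, ('v,'e) enc_edge, ('lv,'le) enc_label) tgraph" where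
  "enc G = \<lparr> tnodes = rnodes G,
     tedges = EE ` redges G \<union> ELab ` dom (rnlab G) \<union> ERoot ` dom (rroot G),
     tsrc = (\<lambda>x. case x of EE e \<Rightarrow> rsrc G e | ELab v \<Rightarrow> v | ERoot v \<Rightarrow> v),
     ttgt = (\<lambda>x. case x of EE e \<Rightarrow> rtgt G e | ELab v \<Rightarrow> v | ERoot v \<Rightarrow> v),
     tnlab = (\<lambda>_. Box),
     telab = (\<lambda>x. case x of EE e \<Rightarrow> EdgeL (relab G e)
                          | ELab v \<Rightarrow> NodeL (the (rnlab G v))
                          | ERoot v \<Rightarrow> RootBit (the (rroot G v))) \<rparr>"

end

theory Submission
  imports Defs
begin

definition cE :: "('a \<Rightarrow> 'v) \<Rightarrow> ('b \<Rightarrow> 'e) \<Rightarrow> ('a,'b) enc_edge \<Rightarrow> ('v,'e) enc_edge" where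
  "cE gV gE x = (case x of EE e \<Rightarrow> EE (gE e) | ELab v \<Rightarrow> ELab (gV v) | ERoot v \<Rightarrow> ERoot (gV v))"

definition clean :: "('v,'e,'lv,'le) rgraph \<Rightarrow> ('v,'e,'lv,'le) rgraph" where
  "clean G = G\<lparr>rnlab := (\<lambda>v. if v \<in> rnodes G then rnlab G v else None),
               rroot := (\<lambda>v. if v \<in> rnodes G then rroot G v else None)\<rparr>"

lemma riso_clean: "riso (clean A) B = riso A B"
  unfolding riso_def clean_def by simp

lemma clean_dom: "dom (rnlab (clean A)) \<subseteq> rnodes (clean A)" "dom (rroot (clean A)) \<subseteq> rnodes (clean A)"
  unfolding clean_def by (auto split: if_splits)

lemma enc_simps[simp]:
  "tnodes (enc G) = rnodes G"
  "tedges (enc G) = EE ` redges G \<union> ELab ` dom (rnlab G) \<union> ERoot ` dom (rroot G)"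
  "tsrc (enc G) (EE e) = rsrc G e" "tsrc (enc G) (ELab v) = v" "tsrc (enc G) (ERoot v) = v"
  "ttgt (enc G) (EE e) = rtgt G e" "ttgt (enc G) (ELab v) = v" "ttgt (enc G) (ERoot v) = v"
  "tnlab (enc G) w = Box"
  "telab (enc G) (EE e) = EdgeL (relab G e)"
  "telab (enc G) (ELab v) = NodeL (the (rnlab G v))"
  "telab (enc G) (ERoot v) = RootBit (the (rroot G v))"
  unfolding enc_def by simp_all

lemma enc_mem[simp]:
  "EE x \<in> EE ` S \<longleftrightarrow> x \<in> S" "EE x \<in> ELab ` T \<longleftrightarrow> False" "EE x \<in> ERoot ` T \<longleftrightarrow> False"
  "ELab y \<in> EE ` S \<longleftrightarrow> False" "ELab y \<in> ELab ` T \<longleftrightarrow> y \<in> T" "ELab y \<in> ERoot ` T \<longleftrightarrow> False"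
  "ERoot y \<in> EE ` S \<longleftrightarrow> False" "ERoot y \<in> ELab ` T \<longleftrightarrow> False" "ERoot y \<in> ERoot ` T \<longleftrightarrow> y \<in> T"
  by auto

lemma sum_mem[simp]:
  "Inl x \<in> Inl ` A \<longleftrightarrow> x \<in> A" "Inl x \<in> Inr ` B \<longleftrightarrow> False"
  "Inr y \<in> Inl ` A \<longleftrightarrow> False" "Inr y \<in> Inr ` B \<longleftrightarrow> y \<in> B"
  by auto

lemma enc_EE: "x \<in> tedges (enc B) \<Longrightarrow> telab (enc B) x = EdgeL l \<Longrightarrow> \<exists>y\<in>redges B. x = EE y \<and> relab B y = l"
  by auto
lemma enc_ELab: "x \<in> tedges (enc B) \<Longrightarrow> telab (enc B) x = NodeL l \<Longrightarrow> \<exists>w. x = ELab w \<and> rnlab B w = Some l"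
  by auto
lemma enc_ERoot: "x \<in> tedges (enc B) \<Longrightarrow> telab (enc B) x = RootBit l \<Longrightarrow> \<exists>w. x = ERoot w \<and> rroot B w = Some l"
  by auto

lemma dom_transfer: "bij_betw f A B \<Longrightarrow> dom a \<subseteq> A \<Longrightarrow> dom b \<subseteq> B \<Longrightarrow> \<forall>v\<in>A. b (f v) = a v \<Longrightarrow> f ` dom a = dom b"
  unfolding bij_betw_def by (auto; force)

lemma tiso_trans: "tiso A B \<Longrightarrow> tiso B C \<Longrightarrow> tiso A C"
proof -
  assume "tiso A B" "tiso B C"
  then obtain fV fE gV gE where bV: "bij_betw fV (tnodes A) (tnodes B)" and bE: "bij_betw fE (tedges A) (tedges B)"
    and e: "\<forall>e\<in>tedges A. tsrc B (fE e) = fV (tsrc A e) \<and> ttgt B (fE e) = fV (ttgt A e) \<and> telab B (fE e) = telab A e"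
    and n: "\<forall>v\<in>tnodes A. tnlab B (fV v) = tnlab A v"
    and bV2: "bij_betw gV (tnodes B) (tnodes C)" and bE2: "bij_betw gE (tedges B) (tedges C)"
    and e2: "\<forall>e\<in>tedges B. tsrc C (gE e) = gV (tsrc B e) \<and> ttgt C (gE e) = gV (ttgt B e) \<and> telab C (gE e) = telab B e"
    and n2: "\<forall>v\<in>tnodes B. tnlab C (gV v) = tnlab B v" unfolding tiso_def by blast
  show ?thesis unfolding tiso_def
    apply (rule exI[of _ "gV o fV"], rule exI[of _ "gE o fE"])
    using bij_betw_trans[OF bV bV2] bij_betw_trans[OF bE bE2] e e2 n n2 bV bE
    apply (intro conjI ballI)
        apply assumption
       apply assumption
    by (simp_all add: bij_betwE)
qed

definition eE :: "('v \<Rightarrow> 'w) \<Rightarrow> ('e \<Rightarrow> 'f) \<Rightarrow> ('v,'e) enc_edge \<Rightarrow> ('w,'f) enc_edge" where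
  "eE fV fE x = (case x of EE e \<Rightarrow> EE (fE e) | ELab v \<Rightarrow> ELab (fV v) | ERoot v \<Rightarrow> ERoot (fV v))"

lemma eE_simps[simp]: "eE fV fE (EE e) = EE (fE e)" "eE fV fE (ELab v) = ELab (fV v)" "eE fV fE (ERoot v) = ERoot (fV v)"
  unfolding eE_def by simp_all

lemma riso_tiso1:
  assumes dA: "dom (rnlab A) \<subseteq> rnodes A" "dom (rroot A) \<subseteq> rnodes A"
    and dB: "dom (rnlab B) \<subseteq> rnodes B" "dom (rroot B) \<subseteq> rnodes B"
    and "riso A B"
  shows "tiso (enc A) (enc B)"
proof -
  obtain fV fE where bV: "bij_betw fV (rnodes A) (rnodes B)" and bE: "bij_betw fE (redges A) (redges B)"
     and e: "\<forall>e\<in>redges A. rsrc B (fE e) = fV (rsrc A e) \<and> rtgt B (fE e) = fV (rtgt A e)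
                      \<and> relab B (fE e) = relab A e"
     and n: "\<forall>v\<in>rnodes A. rnlab B (fV v) = rnlab A v \<and> rroot B (fV v) = rroot A v"
    using assms(5) unfolding riso_def by blast
  have d1: "fV ` dom (rnlab A) = dom (rnlab B)" using dom_transfer[OF bV dA(1) dB(1)] n by blast
  have d2: "fV ` dom (rroot A) = dom (rroot B)" using dom_transfer[OF bV dA(2) dB(2)] n by blast
  have injV: "inj_on fV (rnodes A)" and injE: "inj_on fE (redges A)" using bV bE bij_betw_def by auto
  have "inj_on (eE fV fE) (tedges (enc A))"
  proof (rule inj_onI)
    fix x y assume "x \<in> tedges (enc A)" "y \<in> tedges (enc A)" "eE fV fE x = eE fV fE y"
    thus "x = y" using dA
      by (cases x; cases y; simp; meson domI inj_onD injV injE subsetD)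
  qed
  moreover have "eE fV fE ` tedges (enc A) = tedges (enc B)"
  proof -
    have "eE fV fE ` tedges (enc A) = EE ` (fE ` redges A) \<union> ELab ` (fV ` dom (rnlab A)) \<union> ERoot ` (fV ` dom (rroot A))"
      by (simp add: image_Un image_image)
    thus ?thesis using bE d1 d2 by (simp add: bij_betw_def)
  qed
  ultimately have bE': "bij_betw (eE fV fE) (tedges (enc A)) (tedges (enc B))" by (simp add: bij_betw_def)
  have ed: "tsrc (enc B) (eE fV fE x) = fV (tsrc (enc A) x) \<and> ttgt (enc B) (eE fV fE x) = fV (ttgt (enc A) x) \<and>
          telab (enc B) (eE fV fE x) = telab (enc A) x" if x: "x \<in> tedges (enc A)" for x
  proof (cases x)
    case (EE e') thus ?thesis using x e by auto
  next
    case (ELab v) thus ?thesis using x n dA by auto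
  next
    case (ERoot v) thus ?thesis using x n dA by auto
  qed
  show ?thesis unfolding tiso_def
    apply (rule exI[of _ fV], rule exI[of _ "eE fV fE"])
    using bV bE' ed by simp
qed

lemma riso_tiso2:
  assumes dA: "dom (rnlab A) \<subseteq> rnodes A" "dom (rroot A) \<subseteq> rnodes A"
    and dB: "dom (rnlab B) \<subseteq> rnodes B" "dom (rroot B) \<subseteq> rnodes B"
    and "tiso (enc A) (enc B)"
  shows "riso A B"
proof -
  obtain fV fE where bV: "bij_betw fV (rnodes A) (rnodes B)" and bE: "bij_betw fE (tedges (enc A)) (tedges (enc B))"
    and e: "\<forall>e\<in>tedges (enc A). tsrc (enc B) (fE e) = fV (tsrc (enc A) e) \<and> ttgt (enc B) (fE e) = fV (ttgt (enc A) e)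
                      \<and> telab (enc B) (fE e) = telab (enc A) e"
    using assms(5) unfolding tiso_def by auto
  have injV: "inj_on fV (rnodes A)" using bV bij_betw_def by auto
  have injE: "inj_on fE (tedges (enc A))" by (rule bij_betw_imp_inj_on[OF bE])
  have imE: "fE ` tedges (enc A) = tedges (enc B)" by (rule bij_betw_imp_surj_on[OF bE])
  define f where "f = (\<lambda>e. case fE (EE e) of EE y \<Rightarrow> y | _ \<Rightarrow> undefined)"
  have fEE: "fE (EE e) = EE (f e) \<and> f e \<in> redges B \<and> relab B (f e) = relab A e" if "e \<in> redges A" for e
  proof -
    have m: "fE (EE e) \<in> tedges (enc B)" using imE that by auto
    have "telab (enc B) (fE (EE e)) = EdgeL (relab A e)" using e that by auto
    then obtain y where "y \<in> redges B" "fE (EE e) = EE y" "relab B y = relab A e" using enc_EE[OF m] by blast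
    thus ?thesis unfolding f_def by simp
  qed
  have bf: "bij_betw f (redges A) (redges B)"
  proof -
    have "inj_on f (redges A)"
    proof (rule inj_onI)
      fix x y assume "x \<in> redges A" "y \<in> redges A" "f x = f y"
      then have "fE (EE x) = fE (EE y)" using fEE by metis
      thus "x = y" using injE \<open>x \<in> redges A\<close> \<open>y \<in> redges A\<close> by (auto dest: inj_onD)
    qed
    moreover have "f ` redges A = redges B"
    proof
      show "f ` redges A \<subseteq> redges B" using fEE by auto
      show "redges B \<subseteq> f ` redges A"
      proof
        fix y assume y: "y \<in> redges B"
        then have "EE y \<in> fE ` tedges (enc A)" using imE by auto
        then obtain x where x: "x \<in> tedges (enc A)" "fE x = EE y" by (metis imageE)
        have "telab (enc A) x = EdgeL (relab B y)" using e x by (metis enc_simps(10))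
        then obtain z where "z \<in> redges A" "x = EE z" using enc_EE[OF x(1)] by blast
        thus "y \<in> f ` redges A" using fEE x by force
      qed
    qed
    ultimately show ?thesis by (simp add: bij_betw_def)
  qed
  have lab: "rnlab B (fV v) = rnlab A v" if v: "v \<in> rnodes A" for v
  proof (cases "rnlab A v")
    case None
    show ?thesis
    proof (rule ccontr)
      assume "rnlab B (fV v) \<noteq> rnlab A v"
      then obtain l where l: "rnlab B (fV v) = Some l" using None by auto
      then have "ELab (fV v) \<in> fE ` tedges (enc A)" using imE by (auto simp: dom_def)
      then obtain x where x: "x \<in> tedges (enc A)" "fE x = ELab (fV v)" by (metis imageE)
      have "telab (enc A) x = NodeL l" using e x l by (metis enc_simps(11) option.sel)
      then obtain u where u: "x = ELab u" "rnlab A u = Some l" using enc_ELab[OF x(1)] by blast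
      have "fV u = fV v" using e x u by (metis enc_simps(4))
      moreover have "u \<in> rnodes A" using u dA by auto
      ultimately have "u = v" using injV v by (auto dest: inj_onD)
      thus False using u None by simp
    qed
  next
    case (Some l)
    then have mA: "ELab v \<in> tedges (enc A)" by auto
    then have m: "fE (ELab v) \<in> tedges (enc B)" using imE by (metis imageI)
    have "telab (enc B) (fE (ELab v)) = NodeL l" using e mA Some by (metis enc_simps(11,12) option.sel)
    then obtain w where w: "fE (ELab v) = ELab w" "rnlab B w = Some l" using enc_ELab[OF m] by blast
    have "w = fV v" using e w Some by (metis domI enc_simps(2,4) UnI1 UnI2 image_eqI)
    thus ?thesis using w Some by simp
  qed
  have root: "rroot B (fV v) = rroot A v" if v: "v \<in> rnodes A" for v
  proof (cases "rroot A v")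
    case None
    show ?thesis
    proof (rule ccontr)
      assume "rroot B (fV v) \<noteq> rroot A v"
      then obtain l where l: "rroot B (fV v) = Some l" using None by auto
      then have "ERoot (fV v) \<in> fE ` tedges (enc A)" using imE by (auto simp: dom_def)
      then obtain x where x: "x \<in> tedges (enc A)" "fE x = ERoot (fV v)" by (metis imageE)
      have "telab (enc A) x = RootBit l" using e x l by (metis enc_simps(12) option.sel)
      then obtain u where u: "x = ERoot u" "rroot A u = Some l" using enc_ERoot[OF x(1)] by blast
      have "fV u = fV v" using e x u by (metis enc_simps(5))
      moreover have "u \<in> rnodes A" using u dA by auto
      ultimately have "u = v" using injV v by (auto dest: inj_onD)
      thus False using u None by simp
    qed
  next
    case (Some l)
    then have mA: "ERoot v \<in> tedges (enc A)" by auto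
    then have m: "fE (ERoot v) \<in> tedges (enc B)" using imE by (metis imageI)
    have "telab (enc B) (fE (ERoot v)) = RootBit l" using e mA Some by (metis enc_simps(11,12) option.sel)
    then obtain w where w: "fE (ERoot v) = ERoot w" "rroot B w = Some l" using enc_ERoot[OF m] by blast
    have "w = fV v" using e w Some by (metis domI enc_simps(2,5) UnI2 image_eqI)
    thus ?thesis using w Some by simp
  qed
  have srcs: "rsrc B (f x) = fV (rsrc A x) \<and> rtgt B (f x) = fV (rtgt A x)" if "x \<in> redges A" for x
    using e fEE[OF that] that by (metis enc_simps(2,3,6) UnI1 image_eqI)
  show ?thesis unfolding riso_def
    apply (rule exI[of _ fV], rule exI[of _ f])
    using bV bf srcs fEE lab root by simp
qed

lemma cE_simps[simp]: "cE gV gE (EE e) = EE (gE e)" "cE gV gE (ELab v) = ELab (gV v)" "cE gV gE (ERoot v) = ERoot (gV v)"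
  unfolding cE_def by simp_all

lemma tlrgD: "tlrg G \<Longrightarrow> dom (rnlab G) = rnodes G" "tlrg G \<Longrightarrow> dom (rroot G) = rnodes G"
  "tlrg G \<Longrightarrow> e \<in> redges G \<Longrightarrow> rsrc G e \<in> rnodes G" "tlrg G \<Longrightarrow> e \<in> redges G \<Longrightarrow> rtgt G e \<in> rnodes G"
  unfolding tlrg_def rwf_def by auto

lemma morph_iff:
  assumes "tlrg L" "tlrg G"
  shows "tmorph (enc L) (enc G) gV (cE gV gE) \<longleftrightarrow> rmorph L G gV gE"
proof
  assume t: "tmorph (enc L) (enc G) gV (cE gV gE)"
  have im: "cE gV gE ` tedges (enc L) \<subseteq> tedges (enc G)" using t unfolding tmorph_def by blast
  have ed: "\<forall>x\<in>tedges (enc L). tsrc (enc G) (cE gV gE x) = gV (tsrc (enc L) x) \<and> ttgt (enc G) (cE gV gE x) = gV (ttgt (enc L) x)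
                      \<and> telab (enc G) (cE gV gE x) = telab (enc L) x" using t unfolding tmorph_def by blast
  have n: "gV ` rnodes L \<subseteq> rnodes G" using t unfolding tmorph_def by simp
  have e1: "gE e \<in> redges G" if "e \<in> redges L" for e
  proof -
    have "EE e \<in> tedges (enc L)" using that by simp
    then have "cE gV gE (EE e) \<in> tedges (enc G)" using im by blast
    thus ?thesis by simp
  qed
  have l1: "rnlab G (gV v) = Some l" if "rnlab L v = Some l" for v l
  proof -
    have m: "ELab v \<in> tedges (enc L)" using that by auto
    then have "cE gV gE (ELab v) \<in> tedges (enc G)" using im by blast
    moreover have "telab (enc G) (cE gV gE (ELab v)) = NodeL l" using ed m that by (metis enc_simps(11) option.sel)
    ultimately show ?thesis by auto
  qed
  have r1: "rroot G (gV v) = Some l" if "rroot L v = Some l" for v l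
  proof -
    have m: "ERoot v \<in> tedges (enc L)" using that by auto
    then have "cE gV gE (ERoot v) \<in> tedges (enc G)" using im by blast
    moreover have "telab (enc G) (cE gV gE (ERoot v)) = RootBit l" using ed m that by (metis enc_simps(12) option.sel)
    ultimately show ?thesis by auto
  qed
  have e2: "rsrc G (gE e) = gV (rsrc L e) \<and> rtgt G (gE e) = gV (rtgt L e) \<and> relab G (gE e) = relab L e" if "e \<in> redges L" for e
  proof -
    have m: "EE e \<in> tedges (enc L)" using that by simp
    thus ?thesis using ed by (metis cE_simps(1) enc_simps(3,6,10) enc_label.inject(1))
  qed
  show "rmorph L G gV gE" unfolding rmorph_def using n e1 e2 l1 r1 by blast
next
  assume r: "rmorph L G gV gE"
  then have n: "gV ` rnodes L \<subseteq> rnodes G" and e1: "gE ` redges L \<subseteq> redges G"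
    and e2: "\<forall>e\<in>redges L. rsrc G (gE e) = gV (rsrc L e) \<and> rtgt G (gE e) = gV (rtgt L e) \<and> relab G (gE e) = relab L e"
    and l1: "\<forall>v\<in>rnodes L. \<forall>l. rnlab L v = Some l \<longrightarrow> rnlab G (gV v) = Some l"
    and r1: "\<forall>v\<in>rnodes L. \<forall>b. rroot L v = Some b \<longrightarrow> rroot G (gV v) = Some b"
    unfolding rmorph_def by blast+
  note dL = tlrgD(1,2)[OF assms(1)]
  have im: "cE gV gE ` tedges (enc L) \<subseteq> tedges (enc G)"
  proof
    fix y assume "y \<in> cE gV gE ` tedges (enc L)"
    then obtain x where x: "x \<in> tedges (enc L)" "y = cE gV gE x" by (metis imageE)
    show "y \<in> tedges (enc G)"
    proof (cases x)
      case (EE e) thus ?thesis using x e1 by auto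
    next
      case (ELab v) thus ?thesis using x l1 dL by (auto simp: dom_def)
    next
      case (ERoot v)
      then have vd: "v \<in> dom (rroot L)" using x by simp
      then obtain b where b: "rroot L v = Some b" by auto
      have "v \<in> rnodes L" using vd dL by simp
      then have "rroot G (gV v) = Some b" using r1 b by blast
      thus ?thesis using ERoot x by auto
    qed
  qed
  have ed: "tsrc (enc G) (cE gV gE x) = gV (tsrc (enc L) x) \<and> ttgt (enc G) (cE gV gE x) = gV (ttgt (enc L) x)
                      \<and> telab (enc G) (cE gV gE x) = telab (enc L) x" if x: "x \<in> tedges (enc L)" for x
  proof (cases x)
    case (EE e) thus ?thesis using x e2 by auto
  next
    case (ELab v)
    then have vd: "v \<in> dom (rnlab L)" using x by simp
    then obtain b where b: "rnlab L v = Some b" by auto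
    have "v \<in> rnodes L" using vd dL by simp
    then have "rnlab G (gV v) = Some b" using l1 b by blast
    thus ?thesis using ELab b by auto
  next
    case (ERoot v)
    then have vd: "v \<in> dom (rroot L)" using x by simp
    then obtain b where b: "rroot L v = Some b" by auto
    have "v \<in> rnodes L" using vd dL by simp
    then have "rroot G (gV v) = Some b" using r1 b by blast
    thus ?thesis using ERoot b by auto
  qed
  show "tmorph (enc L) (enc G) gV (cE gV gE)" unfolding tmorph_def using n im ed by simp
qed

lemma inj_iff:
  assumes "tlrg L" "inj_on gV (rnodes L)"
  shows "inj_on (cE gV gE) (tedges (enc L)) \<longleftrightarrow> inj_on gE (redges L)"
proof
  assume a: "inj_on (cE gV gE) (tedges (enc L))"
  show "inj_on gE (redges L)"
  proof (rule inj_onI)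
    fix x y assume "x \<in> redges L" "y \<in> redges L" "gE x = gE y"
    then have 1: "cE gV gE (EE x) = cE gV gE (EE y)" and 2: "EE x \<in> tedges (enc L)" and 3: "EE y \<in> tedges (enc L)" by auto
    show "x = y" using inj_onD[OF a 1 2 3] by simp
  qed
next
  assume a: "inj_on gE (redges L)"
  note dL = tlrgD(1,2)[OF assms(1)]
  show "inj_on (cE gV gE) (tedges (enc L))"
  proof (rule inj_onI)
    fix x y assume "x \<in> tedges (enc L)" "y \<in> tedges (enc L)" "cE gV gE x = cE gV gE y"
    thus "x = y" using a assms(2) dL
      by (cases x; cases y; simp; meson inj_onD)
  qed
qed

lemma dangl_iff:
  assumes "tlrg L"
  shows "(\<forall>x \<in> tedges (enc G) - cE gV gE ` tedges (enc L).
           tsrc (enc G) x \<notin> gV ` (tnodes (enc L) - tnodes (enc K)) \<and> ttgt (enc G) x \<notin> gV ` (tnodes (enc L) - tnodes (enc K)))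
    \<longleftrightarrow> (\<forall>e \<in> redges G - gE ` redges L.
           rsrc G e \<notin> gV ` (rnodes L - rnodes K) \<and> rtgt G e \<notin> gV ` (rnodes L - rnodes K))" (is "?T \<longleftrightarrow> ?R")
proof
  assume t: ?T
  show ?R
  proof (intro ballI)
    fix e assume e: "e \<in> redges G - gE ` redges L"
    then have "EE e \<in> tedges (enc G) - cE gV gE ` tedges (enc L)" by auto
    then show "rsrc G e \<notin> gV ` (rnodes L - rnodes K) \<and> rtgt G e \<notin> gV ` (rnodes L - rnodes K)"
      using t by (metis enc_simps(1,3,6))
  qed
next
  assume r: ?R
  note dL = tlrgD(1,2)[OF assms(1)]
  show ?T
  proof
    fix x assume x: "x \<in> tedges (enc G) - cE gV gE ` tedges (enc L)"
    show "tsrc (enc G) x \<notin> gV ` (tnodes (enc L) - tnodes (enc K)) \<and> ttgt (enc G) x \<notin> gV ` (tnodes (enc L) - tnodes (enc K))"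
    proof (cases x)
      case (EE e)
      have "e \<notin> gE ` redges L"
      proof
        assume "e \<in> gE ` redges L"
        then obtain a where a: "a \<in> redges L" "e = gE a" by blast
        then have "x \<in> cE gV gE ` tedges (enc L)" using EE by (metis cE_simps(1) enc_mem(1) enc_simps(2) UnI1 imageI)
        thus False using x by blast
      qed
      then have "e \<in> redges G - gE ` redges L" using x EE by auto
      thus ?thesis using r EE by simp
    next
      case (ELab w)
      have "w \<notin> gV ` rnodes L"
      proof
        assume "w \<in> gV ` rnodes L"
        then obtain a where a: "a \<in> rnodes L" "w = gV a" by blast
        then have "ELab a \<in> tedges (enc L)" using dL by simp
        then have "x \<in> cE gV gE ` tedges (enc L)" using ELab a by (metis cE_simps imageI)
        thus False using x by blast
      qed
      thus ?thesis using ELab by auto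
    next
      case (ERoot w)
      have "w \<notin> gV ` rnodes L"
      proof
        assume "w \<in> gV ` rnodes L"
        then obtain a where a: "a \<in> rnodes L" "w = gV a" by blast
        then have "ERoot a \<in> tedges (enc L)" using dL by simp
        then have "x \<in> cE gV gE ` tedges (enc L)" using ERoot a by (metis cE_simps imageI)
        thus False using x by blast
      qed
      thus ?thesis using ERoot by auto
    qed
  qed
qed

lemma tmorph_cong: "(\<And>x. x \<in> tedges L \<Longrightarrow> f x = g x) \<Longrightarrow> tmorph L G gV f = tmorph L G gV g"
  unfolding tmorph_def by (simp cong: image_cong)

lemma tresult_cong: "(\<And>x. x \<in> tedges L \<Longrightarrow> f x = g x) \<Longrightarrow> tresult G L K R gV f = tresult G L K R gV g"
proof -
  assume a: "\<And>x. x \<in> tedges L \<Longrightarrow> f x = g x"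
  have "f ` (tedges L - tedges K) = g ` (tedges L - tedges K)" using a by (intro image_cong) auto
  thus ?thesis unfolding tresult_def by simp
qed

lemma match_canon:
  assumes "tmorph (enc L) (enc G) gV gE'" "x \<in> tedges (enc L)"
  shows "gE' x = cE gV (\<lambda>e. case gE' (EE e) of EE y \<Rightarrow> y | _ \<Rightarrow> undefined) x"
proof -
  have im: "gE' ` tedges (enc L) \<subseteq> tedges (enc G)" using assms unfolding tmorph_def by blast
  have ed: "\<forall>x\<in>tedges (enc L). tsrc (enc G) (gE' x) = gV (tsrc (enc L) x) \<and> ttgt (enc G) (gE' x) = gV (ttgt (enc L) x)
                      \<and> telab (enc G) (gE' x) = telab (enc L) x" using assms unfolding tmorph_def by blast
  have m: "gE' x \<in> tedges (enc G)" using im assms(2) by blast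
  show ?thesis
  proof (cases x)
    case (EE e)
    have "telab (enc G) (gE' x) = EdgeL (relab L e)" using ed assms(2) EE by auto
    then obtain y where "gE' x = EE y" using enc_EE[OF m] by blast
    thus ?thesis using EE by simp
  next
    case (ELab v)
    have "telab (enc G) (gE' x) = NodeL (the (rnlab L v))" using ed assms(2) ELab by auto
    then obtain w where w: "gE' x = ELab w" using enc_ELab[OF m] by blast
    have "w = gV v" using ed assms(2) ELab w by (metis enc_simps(4))
    thus ?thesis using ELab w by simp
  next
    case (ERoot v)
    have "telab (enc G) (gE' x) = RootBit (the (rroot L v))" using ed assms(2) ERoot by auto
    then obtain w where w: "gE' x = ERoot w" using enc_ERoot[OF m] by blast
    have "w = gV v" using ed assms(2) ERoot w by (metis enc_simps(5))
    thus ?thesis using ERoot w by simp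
  qed
qed

lemma cE_img1: "EE e \<in> cE gV gE ` S \<longleftrightarrow> (\<exists>a. EE a \<in> S \<and> e = gE a)"
proof
  assume "EE e \<in> cE gV gE ` S"
  then obtain x where "x \<in> S" "EE e = cE gV gE x" by blast
  thus "\<exists>a. EE a \<in> S \<and> e = gE a" by (cases x) auto
next
  assume "\<exists>a. EE a \<in> S \<and> e = gE a"
  then obtain a where "EE a \<in> S" "e = gE a" by blast
  thus "EE e \<in> cE gV gE ` S" by (metis cE_simps imageI)
qed

lemma cE_img2: "ELab w \<in> cE gV gE ` S \<longleftrightarrow> (\<exists>a. ELab a \<in> S \<and> w = gV a)"
proof
  assume "ELab w \<in> cE gV gE ` S"
  then obtain x where "x \<in> S" "ELab w = cE gV gE x" by blast
  thus "\<exists>a. ELab a \<in> S \<and> w = gV a" by (cases x) auto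
next
  assume "\<exists>a. ELab a \<in> S \<and> w = gV a"
  then obtain a where "ELab a \<in> S" "w = gV a" by blast
  thus "ELab w \<in> cE gV gE ` S" by (metis cE_simps imageI)
qed

lemma cE_img3: "ERoot w \<in> cE gV gE ` S \<longleftrightarrow> (\<exists>a. ERoot a \<in> S \<and> w = gV a)"
proof
  assume "ERoot w \<in> cE gV gE ` S"
  then obtain x where "x \<in> S" "ERoot w = cE gV gE x" by blast
  thus "\<exists>a. ERoot a \<in> S \<and> w = gV a" by (cases x) auto
next
  assume "\<exists>a. ERoot a \<in> S \<and> w = gV a"
  then obtain a where "ERoot a \<in> S" "w = gV a" by blast
  thus "ERoot w \<in> cE gV gE ` S" by (metis cE_simps imageI)
qed

lemmas cE_img = cE_img1 cE_img2 cE_img3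

lemma memX:
  assumes "dom (rnlab G) = rnodes G" "dom (rroot G) = rnodes G"
    "dom (rnlab L) = rnodes L" "dom (rroot L) = rnodes L"
    "dom (rnlab R) = rnodes R" "dom (rroot R) = rnodes R"
  shows
  "Inl (EE e) \<in> tedges (tresult (enc G) (enc L) (enc K) (enc R) gV (cE gV gE)) \<longleftrightarrow> e \<in> redges G \<and> e \<notin> gE ` (redges L - redges K)"
  "Inl (ELab w) \<in> tedges (tresult (enc G) (enc L) (enc K) (enc R) gV (cE gV gE)) \<longleftrightarrow> w \<in> rnodes G \<and> w \<notin> gV ` (rnodes L - dom (rnlab K))"
  "Inl (ERoot w) \<in> tedges (tresult (enc G) (enc L) (enc K) (enc R) gV (cE gV gE)) \<longleftrightarrow> w \<in> rnodes G \<and> w \<notin> gV ` (rnodes L - dom (rroot K))"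
  "Inr (EE e') \<in> tedges (tresult (enc G) (enc L) (enc K) (enc R) gV (cE gV gE)) \<longleftrightarrow> e' \<in> redges R \<and> e' \<notin> redges K"
  "Inr (ELab v) \<in> tedges (tresult (enc G) (enc L) (enc K) (enc R) gV (cE gV gE)) \<longleftrightarrow> v \<in> rnodes R \<and> v \<notin> dom (rnlab K)"
  "Inr (ERoot v) \<in> tedges (tresult (enc G) (enc L) (enc K) (enc R) gV (cE gV gE)) \<longleftrightarrow> v \<in> rnodes R \<and> v \<notin> dom (rroot K)"
  using assms
  by (simp_all add: tresult_def Let_def cE_img; blast)+

lemma clean_simps[simp]: "rnodes (clean G) = rnodes G" "redges (clean G) = redges G" "rsrc (clean G) = rsrc G"
  "rtgt (clean G) = rtgt G" "relab (clean G) = relab G"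
  "rnlab (clean G) v = (if v \<in> rnodes G then rnlab G v else None)"
  "rroot (clean G) v = (if v \<in> rnodes G then rroot G v else None)"
  unfolding clean_def by simp_all

lemma res_simps:
  "rnodes (rresult G L K R gV gE) = Inl ` (rnodes G - gV ` (rnodes L - rnodes K)) \<union> Inr ` (rnodes R - rnodes K)"
  "redges (rresult G L K R gV gE) = Inl ` (redges G - gE ` (redges L - redges K)) \<union> Inr ` (redges R - redges K)"
  "rsrc (rresult G L K R gV gE) (Inl e) = Inl (rsrc G e)"
  "rsrc (rresult G L K R gV gE) (Inr e') = (if rsrc R e' \<in> rnodes K then Inl (gV (rsrc R e')) else Inr (rsrc R e'))"
  "rtgt (rresult G L K R gV gE) (Inl e) = Inl (rtgt G e)"
  "rtgt (rresult G L K R gV gE) (Inr e') = (if rtgt R e' \<in> rnodes K then Inl (gV (rtgt R e')) else Inr (rtgt R e'))"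
  "relab (rresult G L K R gV gE) (Inl e) = relab G e"
  "relab (rresult G L K R gV gE) (Inr e') = relab R e'"
  "rnlab (rresult G L K R gV gE) (Inl w) = (if w \<in> gV ` {k \<in> rnodes K. rnlab K k = None} then rnlab R (the_inv_into (rnodes L) gV w) else rnlab G w)"
  "rnlab (rresult G L K R gV gE) (Inr v) = rnlab R v"
  "rroot (rresult G L K R gV gE) (Inl w) = (if w \<in> gV ` {k \<in> rnodes K. rroot K k = None} then rroot R (the_inv_into (rnodes L) gV w) else rroot G w)"
  "rroot (rresult G L K R gV gE) (Inr v) = rroot R v"
  unfolding rresult_def Let_def by simp_all

lemma sum_enc_cases:
  obtains e where "x = Inl (EE e)" | w where "x = Inl (ELab w)" | w where "x = Inl (ERoot w)"
    | e where "x = Inr (EE e)" | w where "x = Inr (ELab w)" | w where "x = Inr (ERoot w)"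
  by (cases x rule: sum.exhaust; rename_tac y; case_tac y; simp)

lemma enc_sum_cases:
  obtains e where "x = EE (Inl e)" | w where "x = ELab (Inl w)" | w where "x = ERoot (Inl w)"
    | e where "x = EE (Inr e)" | w where "x = ELab (Inr w)" | w where "x = ERoot (Inr w)"
  by (cases x; rename_tac y; case_tac y; simp)

definition phiF :: "('a \<Rightarrow> 'v + 'a) \<Rightarrow> ('v,'e) enc_edge + ('a,'b) enc_edge \<Rightarrow> ('v+'a, 'e+'b) enc_edge" where
  "phiF cod x = (case x of Inl y \<Rightarrow> eE Inl Inl y | Inr y \<Rightarrow> eE cod Inr y)"

definition psiF :: "('a \<Rightarrow> 'v) \<Rightarrow> 'a set \<Rightarrow> 'a set \<Rightarrow> 'a set \<Rightarrow> ('v+'a, 'e+'b) enc_edge \<Rightarrow> ('v,'e) enc_edge + ('a,'b) enc_edge" where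
  "psiF gV VL D1 D2 y = (case y of EE (Inl e) \<Rightarrow> Inl (EE e) | EE (Inr e) \<Rightarrow> Inr (EE e)
     | ELab (Inl w) \<Rightarrow> (if w \<in> gV ` D1 then Inr (ELab (the_inv_into VL gV w)) else Inl (ELab w))
     | ELab (Inr v) \<Rightarrow> Inr (ELab v)
     | ERoot (Inl w) \<Rightarrow> (if w \<in> gV ` D2 then Inr (ERoot (the_inv_into VL gV w)) else Inl (ERoot w))
     | ERoot (Inr v) \<Rightarrow> Inr (ERoot v))"

lemma phiF_simps[simp]: "phiF cod (Inl (EE e)) = EE (Inl e)" "phiF cod (Inl (ELab w)) = ELab (Inl w)" "phiF cod (Inl (ERoot w)) = ERoot (Inl w)"
  "phiF cod (Inr (EE e')) = EE (Inr e')" "phiF cod (Inr (ELab v)) = ELab (cod v)" "phiF cod (Inr (ERoot v)) = ERoot (cod v)"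
  unfolding phiF_def by simp_all

lemma psiF_simps[simp]: "psiF gV VL D1 D2 (EE (Inl e)) = Inl (EE e)" "psiF gV VL D1 D2 (EE (Inr e')) = Inr (EE e')"
  "psiF gV VL D1 D2 (ELab (Inl w)) = (if w \<in> gV ` D1 then Inr (ELab (the_inv_into VL gV w)) else Inl (ELab w))"
  "psiF gV VL D1 D2 (ELab (Inr v)) = Inr (ELab v)"
  "psiF gV VL D1 D2 (ERoot (Inl w)) = (if w \<in> gV ` D2 then Inr (ERoot (the_inv_into VL gV w)) else Inl (ERoot w))"
  "psiF gV VL D1 D2 (ERoot (Inr v)) = Inr (ERoot v)"
  unfolding psiF_def by simp_all

lemma key:
  fixes L K R :: "('a,'b,'lv,'le) rgraph" and G :: "('v,'e,'lv,'le) rgraph"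
  assumes rule: "rrule L K R" and G: "tlrg G" and m: "rmorph L G gV gE" and inj: "inj_on gV (rnodes L)"
  defines "X \<equiv> tresult (enc G) (enc L) (enc K) (enc R) gV (cE gV gE)"
    and "Y \<equiv> enc (clean (rresult G L K R gV gE))"
  shows "tiso X Y \<and> tiso Y X"
proof -
  have tL: "tlrg L" and tR: "tlrg R" and wK: "rwf K" and sL: "rsubgraph K L" and sR: "rsubgraph K R"
    using rule unfolding rrule_def by auto
  note dL = tlrgD(1,2)[OF tL] and dR = tlrgD(1,2)[OF tR] and dG = tlrgD(1,2)[OF G]
  have KL: "rnodes K \<subseteq> rnodes L" and KR: "rnodes K \<subseteq> rnodes R" using sL sR unfolding rsubgraph_def by auto
  have dK: "dom (rnlab K) \<subseteq> rnodes K" "dom (rroot K) \<subseteq> rnodes K" using wK unfolding rwf_def by auto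
  have gVG: "gV v \<in> rnodes G" if "v \<in> rnodes L" for v using m that unfolding rmorph_def by blast
  have inv: "the_inv_into (rnodes L) gV (gV k) = k" if "k \<in> rnodes L" for k
    using the_inv_into_f_f[OF inj that] .
  define res where "res = rresult G L K R gV gE"
  have Yeq: "Y = enc (clean res)" unfolding Y_def res_def ..
  have nres: "n \<in> rnodes res \<longleftrightarrow> (case n of Inl w \<Rightarrow> w \<in> rnodes G \<and> w \<notin> gV ` (rnodes L - rnodes K) | Inr v \<Rightarrow> v \<in> rnodes R \<and> v \<notin> rnodes K)" for n
    unfolding res_def res_simps by (cases n) auto
  have eres: "n \<in> redges res \<longleftrightarrow> (case n of Inl e \<Rightarrow> e \<in> redges G \<and> e \<notin> gE ` (redges L - redges K) | Inr e \<Rightarrow> e \<in> redges R \<and> e \<notin> redges K)" for n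
    unfolding res_def res_simps by (cases n) auto
  have labtot: "rnlab res n \<noteq> None \<and> rroot res n \<noteq> None" if "n \<in> rnodes res" for n
  proof (cases n)
    case (Inl w)
    then have w: "w \<in> rnodes G" using that nres by auto
    show ?thesis
    proof (intro conjI)
      show "rnlab res n \<noteq> None"
      proof (cases "w \<in> gV ` {k \<in> rnodes K. rnlab K k = None}")
        case True
        then obtain k where k: "k \<in> rnodes K" "w = gV k" by blast
        then have kL: "k \<in> rnodes L" and kR: "k \<in> rnodes R" using KL KR by auto
        have "rnlab R k \<noteq> None" using dR kR by auto
        then show ?thesis using Inl True k inv[OF kL] by (simp add: res_def res_simps)
      next
        case False
        have "rnlab G w \<noteq> None" using dG w by auto
        thus ?thesis using Inl False by (simp add: res_def res_simps)
      qed
      show "rroot res n \<noteq> None"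
      proof (cases "w \<in> gV ` {k \<in> rnodes K. rroot K k = None}")
        case True
        then obtain k where k: "k \<in> rnodes K" "w = gV k" by blast
        then have kL: "k \<in> rnodes L" and kR: "k \<in> rnodes R" using KL KR by auto
        have "rroot R k \<noteq> None" using dR kR by auto
        then show ?thesis using Inl True k inv[OF kL] by (simp add: res_def res_simps)
      next
        case False
        have "rroot G w \<noteq> None" using dG w by auto
        thus ?thesis using Inl False by (simp add: res_def res_simps)
      qed
    qed
  next
    case (Inr v)
    then have "v \<in> rnodes R" using that nres by auto
    then have "rnlab R v \<noteq> None" "rroot R v \<noteq> None" using dR by auto
    thus ?thesis using Inr by (simp add: res_def res_simps)
  qed
  have memY: "y \<in> tedges Y \<longleftrightarrow> (case y of EE n \<Rightarrow> n \<in> redges res | ELab n \<Rightarrow> n \<in> rnodes res | ERoot n \<Rightarrow> n \<in> rnodes res)" for y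
    unfolding Yeq using labtot by (cases y) (auto simp: dom_def)
  note memX = memX[OF dG dL dR, where K=K and gV=gV and gE=gE, folded X_def]
  define cod where "cod = (\<lambda>v. if v \<in> rnodes K then Inl (gV v) else Inr v)"
  define phi where "phi = (phiF cod :: ('v,'e) enc_edge + ('a,'b) enc_edge \<Rightarrow> ('v+'a, 'e+'b) enc_edge)"
  define psi where "psi = (psiF :: _ \<Rightarrow> _ \<Rightarrow> _ \<Rightarrow> _ \<Rightarrow> ('v+'a, 'e+'b) enc_edge \<Rightarrow> _) gV (rnodes L) (rnodes K - dom (rnlab K)) (rnodes K - dom (rroot K))"
  have injK: "gV k \<notin> gV ` (rnodes L - rnodes K)" if "k \<in> rnodes K" for k
    using inj that KL by (auto dest: inj_onD)
  have a: "phi x \<in> tedges Y \<and> psi (phi x) = x" if x: "x \<in> tedges X" for x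
  proof (cases x rule: sum_enc_cases)
    case (1 e) thus ?thesis using x memX by (simp add: memY eres phi_def psi_def)
  next
    case (2 w)
    then have w: "w \<in> rnodes G" "w \<notin> gV ` (rnodes L - dom (rnlab K))" using x memX by auto
    have "w \<notin> gV ` (rnodes L - rnodes K)" using w(2) dK by blast
    moreover have "w \<notin> gV ` (rnodes K - dom (rnlab K))" using w(2) KL by blast
    ultimately show ?thesis using 2 w by (simp add: memY nres phi_def psi_def)
  next
    case (3 w)
    then have w: "w \<in> rnodes G" "w \<notin> gV ` (rnodes L - dom (rroot K))" using x memX by auto
    have "w \<notin> gV ` (rnodes L - rnodes K)" using w(2) dK by blast
    moreover have "w \<notin> gV ` (rnodes K - dom (rroot K))" using w(2) KL by blast
    ultimately show ?thesis using 3 w by (simp add: memY nres phi_def psi_def)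
  next
    case (4 e) thus ?thesis using x memX by (simp add: memY eres phi_def psi_def)
  next
    case (5 v)
    then have v: "v \<in> rnodes R" "v \<notin> dom (rnlab K)" using x memX by auto
    show ?thesis
    proof (cases "v \<in> rnodes K")
      case True
      then have "v \<in> rnodes L" using KL by auto
      thus ?thesis using 5 v True injK[OF True] gVG inv by (auto simp: memY nres phi_def psi_def cod_def)
    next
      case False
      thus ?thesis using 5 v by (auto simp: memY nres phi_def psi_def cod_def)
    qed
  next
    case (6 v)
    then have v: "v \<in> rnodes R" "v \<notin> dom (rroot K)" using x memX by auto
    show ?thesis
    proof (cases "v \<in> rnodes K")
      case True
      then have "v \<in> rnodes L" using KL by auto
      thus ?thesis using 6 v True injK[OF True] gVG inv by (auto simp: memY nres phi_def psi_def cod_def)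
    next
      case False
      thus ?thesis using 6 v by (auto simp: memY nres phi_def psi_def cod_def)
    qed
  qed
  have b: "psi y \<in> tedges X \<and> phi (psi y) = y" if y: "y \<in> tedges Y" for y
  proof (cases y rule: enc_sum_cases)
    case (1 e) thus ?thesis using y memX by (simp add: memY eres phi_def psi_def)
  next
    case (4 e) thus ?thesis using y memX by (simp add: memY eres phi_def psi_def)
  next
    case (5 v) thus ?thesis using y memX dK by (auto simp: memY nres phi_def psi_def cod_def)
  next
    case (6 v) thus ?thesis using y memX dK by (auto simp: memY nres phi_def psi_def cod_def)
  next
    case (2 w)
    then have w: "w \<in> rnodes G" "w \<notin> gV ` (rnodes L - rnodes K)" using y by (auto simp: memY nres)
    show ?thesis
    proof (cases "w \<in> gV ` (rnodes K - dom (rnlab K))")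
      case True
      then obtain k where k: "k \<in> rnodes K" "k \<notin> dom (rnlab K)" "w = gV k" by blast
      then have "k \<in> rnodes L" "k \<in> rnodes R" using KL KR by auto
      thus ?thesis using 2 True k inv memX by (simp add: phi_def psi_def cod_def)
    next
      case False
      then have "w \<notin> gV ` (rnodes L - dom (rnlab K))" using w(2) by blast
      thus ?thesis using 2 False w memX by (simp add: phi_def psi_def cod_def)
    qed
  next
    case (3 w)
    then have w: "w \<in> rnodes G" "w \<notin> gV ` (rnodes L - rnodes K)" using y by (auto simp: memY nres)
    show ?thesis
    proof (cases "w \<in> gV ` (rnodes K - dom (rroot K))")
      case True
      then obtain k where k: "k \<in> rnodes K" "k \<notin> dom (rroot K)" "w = gV k" by blast
      then have "k \<in> rnodes L" "k \<in> rnodes R" using KL KR by auto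
      thus ?thesis using 3 True k inv memX by (simp add: phi_def psi_def cod_def)
    next
      case False
      then have "w \<notin> gV ` (rnodes L - dom (rroot K))" using w(2) by blast
      thus ?thesis using 3 False w memX by (simp add: phi_def psi_def cod_def)
    qed
  qed
  have Xs: "tsrc X (Inl y) = Inl (tsrc (enc G) y)" "tsrc X (Inr z) = cod (tsrc (enc R) z)"
    "ttgt X (Inl y) = Inl (ttgt (enc G) y)" "ttgt X (Inr z) = cod (ttgt (enc R) z)"
    "telab X (Inl y) = telab (enc G) y" "telab X (Inr z) = telab (enc R) z" for y z
    unfolding X_def tresult_def Let_def cod_def by simp_all
  have setK: "{k \<in> rnodes K. rnlab K k = None} = rnodes K - dom (rnlab K)"
     "{k \<in> rnodes K. rroot K k = None} = rnodes K - dom (rroot K)" by auto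
  have c: "tsrc Y (phi x) = tsrc X x \<and> ttgt Y (phi x) = ttgt X x \<and> telab Y (phi x) = telab X x" if x: "x \<in> tedges X" for x
  proof -
    have pY: "phi x \<in> tedges Y" using a[OF x] by blast
    show ?thesis
    proof (cases x rule: sum_enc_cases)
      case (1 e) thus ?thesis by (simp add: Yeq res_def res_simps Xs phi_def)
    next
      case (4 e) thus ?thesis by (simp add: Yeq res_def res_simps Xs phi_def cod_def)
    next
      case (2 w)
      then have w: "w \<notin> gV ` (rnodes L - dom (rnlab K))" using x memX by auto
      then have "w \<notin> gV ` (rnodes K - dom (rnlab K))" using KL by blast
      moreover have "Inl w \<in> rnodes res" using pY 2 by (simp add: memY phi_def)
      ultimately show ?thesis using 2 by (simp add: Yeq res_simps Xs phi_def setK res_def)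
    next
      case (3 w)
      then have w: "w \<notin> gV ` (rnodes L - dom (rroot K))" using x memX by auto
      then have "w \<notin> gV ` (rnodes K - dom (rroot K))" using KL by blast
      moreover have "Inl w \<in> rnodes res" using pY 3 by (simp add: memY phi_def)
      ultimately show ?thesis using 3 by (simp add: Yeq res_simps Xs phi_def setK res_def)
    next
      case (5 v)
      then have v: "v \<notin> dom (rnlab K)" using x memX by auto
      have n: "cod v \<in> rnodes res" using pY 5 by (simp add: memY phi_def)
      show ?thesis
      proof (cases "v \<in> rnodes K")
        case True
        then have "v \<in> rnodes L" using KL by auto
        then show ?thesis using 5 True v n inv by (simp add: Yeq res_simps Xs phi_def setK cod_def res_def)
      next
        case False
        then show ?thesis using 5 v n by (simp add: Yeq res_simps Xs phi_def setK cod_def res_def)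
      qed
    next
      case (6 v)
      then have v: "v \<notin> dom (rroot K)" using x memX by auto
      have n: "cod v \<in> rnodes res" using pY 6 by (simp add: memY phi_def)
      show ?thesis
      proof (cases "v \<in> rnodes K")
        case True
        then have "v \<in> rnodes L" using KL by auto
        then show ?thesis using 6 True v n inv by (simp add: Yeq res_simps Xs phi_def setK cod_def res_def)
      next
        case False
        then show ?thesis using 6 v n by (simp add: Yeq res_simps Xs phi_def setK cod_def res_def)
      qed
    qed
  qed
  have nodes: "tnodes X = tnodes Y" unfolding X_def Y_def tresult_def Let_def by (simp add: res_simps)
  have bij1: "bij_betw phi (tedges X) (tedges Y)"
    by (rule bij_betw_byWitness[where f'=psi]) (use a b in auto)
  have bij2: "bij_betw psi (tedges Y) (tedges X)"
    by (rule bij_betw_byWitness[where f'=phi]) (use a b in auto)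
  have tnl: "tnlab X v = Box" "tnlab Y v = Box" for v
    unfolding X_def Y_def tresult_def Let_def by (simp_all split: sum.splits)
  have 1: "tiso X Y" unfolding tiso_def
    apply (rule exI[of _ id], rule exI[of _ phi])
    using nodes bij1 c tnl by simp
  have c2: "tsrc X (psi y) = tsrc Y y \<and> ttgt X (psi y) = ttgt Y y \<and> telab X (psi y) = telab Y y" if y: "y \<in> tedges Y" for y
    using b[OF y] c[of "psi y"] by auto
  have 2: "tiso Y X" unfolding tiso_def
    apply (rule exI[of _ id], rule exI[of _ psi])
    using nodes bij2 c2 tnl by simp
  show ?thesis using 1 2 by blast
qed


theorem theorem6p1:
  fixes L K R :: "('a,'b,'lv,'le) rgraph"
    and G :: "('v,'e,'lv,'le) rgraph"
    and H :: "('w,'f,'lv,'le) rgraph"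
  assumes "rrule L K R"
    and "tlrg G" and "tlrg H"
  shows "rderiv L K R G H \<longleftrightarrow> tderiv (enc L) (enc K) (enc R) (enc G) (enc H)"
proof
  have tL: "tlrg L" using assms(1) unfolding rrule_def by auto
  have dH: "dom (rnlab H) \<subseteq> rnodes H" "dom (rroot H) \<subseteq> rnodes H" using tlrgD(1,2)[OF assms(3)] by auto
  {
    assume "rderiv L K R G H"
    then obtain gV gE where m: "rmorph L G gV gE" and iV: "inj_on gV (rnodes L)" and iE: "inj_on gE (redges L)"
      and d: "\<forall>e \<in> redges G - gE ` redges L.
           rsrc G e \<notin> gV ` (rnodes L - rnodes K) \<and> rtgt G e \<notin> gV ` (rnodes L - rnodes K)"
      and i: "riso (rresult G L K R gV gE) H" unfolding rderiv_def by blast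
    have i': "riso (clean (rresult G L K R gV gE)) H" using i by (simp only: riso_clean)
    have "tiso (enc (clean (rresult G L K R gV gE))) (enc H)"
      by (rule riso_tiso1[OF clean_dom dH i'])
    then have t: "tiso (tresult (enc G) (enc L) (enc K) (enc R) gV (cE gV gE)) (enc H)"
      by (rule tiso_trans[OF conjunct1[OF key[OF assms(1,2) m iV]]])
    have tm: "tmorph (enc L) (enc G) gV (cE gV gE)" unfolding morph_iff[OF tL assms(2)] by (rule m)
    have ti: "inj_on (cE gV gE) (tedges (enc L))" unfolding inj_iff[OF tL iV] by (rule iE)
    have td: "\<forall>x \<in> tedges (enc G) - cE gV gE ` tedges (enc L).
           tsrc (enc G) x \<notin> gV ` (tnodes (enc L) - tnodes (enc K)) \<and> ttgt (enc G) x \<notin> gV ` (tnodes (enc L) - tnodes (enc K))"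
      unfolding dangl_iff[OF tL, of G gV gE K] by (rule d)
    have tv: "inj_on gV (tnodes (enc L))" using iV by simp
    show "tderiv (enc L) (enc K) (enc R) (enc G) (enc H)" unfolding tderiv_def
      by (rule exI[of _ gV], rule exI[of _ "cE gV gE"]) (intro conjI; fact)
  }
  {
    assume "tderiv (enc L) (enc K) (enc R) (enc G) (enc H)"
    then obtain gV gE' where m: "tmorph (enc L) (enc G) gV gE'" and iV0: "inj_on gV (tnodes (enc L))"
      and iE: "inj_on gE' (tedges (enc L))"
      and d: "\<forall>x \<in> tedges (enc G) - gE' ` tedges (enc L).
           tsrc (enc G) x \<notin> gV ` (tnodes (enc L) - tnodes (enc K)) \<and> ttgt (enc G) x \<notin> gV ` (tnodes (enc L) - tnodes (enc K))"
      and i: "tiso (tresult (enc G) (enc L) (enc K) (enc R) gV gE') (enc H)" unfolding tderiv_def by blast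
    have iV: "inj_on gV (rnodes L)" using iV0 by simp
    define gE where "gE = (\<lambda>e. case gE' (EE e) of EE y \<Rightarrow> y | _ \<Rightarrow> undefined)"
    have can: "\<And>x. x \<in> tedges (enc L) \<Longrightarrow> gE' x = cE gV gE x" unfolding gE_def by (rule match_canon[OF m])
    have e1: "tmorph (enc L) (enc G) gV gE' = tmorph (enc L) (enc G) gV (cE gV gE)" by (rule tmorph_cong) (rule can)
    have m': "rmorph L G gV gE" using m unfolding e1 morph_iff[OF tL assms(2)] .
    have e2: "inj_on gE' (tedges (enc L)) = inj_on (cE gV gE) (tedges (enc L))" by (rule inj_on_cong) (rule can)
    have iE': "inj_on gE (redges L)" using iE unfolding e2 inj_iff[OF tL iV] .
    have img: "gE' ` tedges (enc L) = cE gV gE ` tedges (enc L)" by (rule image_cong[OF refl]) (rule can)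
    have d': "\<forall>e \<in> redges G - gE ` redges L.
           rsrc G e \<notin> gV ` (rnodes L - rnodes K) \<and> rtgt G e \<notin> gV ` (rnodes L - rnodes K)"
      using d unfolding img dangl_iff[OF tL, of G gV gE K] .
    have e3: "tresult (enc G) (enc L) (enc K) (enc R) gV gE' = tresult (enc G) (enc L) (enc K) (enc R) gV (cE gV gE)"
      by (rule tresult_cong) (rule can)
    have "tiso (tresult (enc G) (enc L) (enc K) (enc R) gV (cE gV gE)) (enc H)"
      using i unfolding e3 .
    then have "tiso (enc (clean (rresult G L K R gV gE))) (enc H)"
      by (rule tiso_trans[OF conjunct2[OF key[OF assms(1,2) m' iV]]])
    then have "riso (clean (rresult G L K R gV gE)) H" by (rule riso_tiso2[OF clean_dom dH])
    then have i': "riso (rresult G L K R gV gE) H" by (simp only: riso_clean)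
    show "rderiv L K R G H" unfolding rderiv_def
      by (rule exI[of _ gV], rule exI[of _ gE]) (intro conjI; fact)
  }
qed

end
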